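(* Let $\Omega\subset\mathbb{R}^N$ be a bounded open set, $C>0$, $s\in(0,\tfrac14)$, and let $u\in\mathcal{H}^s_0(\Omega)$ satisfy $\|u\|_s<C$. Then $u\in\mathcal{H}^\sigma_0(\Omega)$ for every $\sigma\in(0,s)$, and there is a constant $C'=C'(C,\Omega)>0$, independent of $s$, $\sigma$ and $u$, such that $$|u|_2^2+\|u\|_\sigma^2<C'\qquad\text{for all }\sigma\in(0,s).$$
   Context: $|u|_q:=(\int_\Omega|u|^q\,dx)^{1/q}$. For $s\in(0,1)$, $\mathcal{H}^s_0(\Omega):=\{u\in H^s(\mathbb{R}^N):u=0\text{ in }\mathbb{R}^N\setminus\Omega\}$ with norm $\|u\|_s$ given by $\|u\|_s^2=\frac{c_{N,s}}{2}\iint\frac{|u(x)-u(y)|^2}{|x-y|^{N+2s}}dx\,dy=\int_{\mathbb{R}^N}|\xi|^{2s}|\widehat u(\xi)|^2d\xi$, where $c_{N,s}:=4^s\pi^{-N/2}s(1-s)\frac{\Gamma(\frac N2+s)}{\Gamma(2-s)}$ and $\widehat u(\xi)=(2\pi)^{-N/2}\int e^{-ix\cdot\xi}u(x)dx$. *)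

theory Defs
  imports "HOL-Analysis.Analysis"
begin

text \<open>R^N is modelled by an arbitrary Euclidean space 'a, N = DIM('a).\<close>

definition cNs :: "nat \<Rightarrow> real \<Rightarrow> real" where
  "cNs N s = 4 powr s * pi powr (- real N / 2) * s * (1 - s)
             * Gamma (real N / 2 + s) / Gamma (2 - s)"

definition gagliardo :: "real \<Rightarrow> ('a::euclidean_space \<Rightarrow> real) \<Rightarrow> ennreal" where
  "gagliardo s u = (\<integral>\<^sup>+ x. \<integral>\<^sup>+ y. ennreal ((u x - u y)\<^sup>2 / norm (x - y) powr (real DIM('a) + 2 * s)) \<partial>lborel \<partial>lborel)"

definition Hs :: "real \<Rightarrow> ('a::euclidean_space \<Rightarrow> real) set" where
  "Hs s = {u. u \<in> borel_measurable lborel \<and> integrable lborel (\<lambda>x. (u x)\<^sup>2)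
              \<and> gagliardo s u < \<infinity>}"

definition Hs0 :: "real \<Rightarrow> 'a set \<Rightarrow> ('a::euclidean_space \<Rightarrow> real) set" where
  "Hs0 s \<Omega> = {u \<in> Hs s. AE x in lborel. x \<notin> \<Omega> \<longrightarrow> u x = 0}"

definition fs_norm_sq :: "real \<Rightarrow> ('a::euclidean_space \<Rightarrow> real) \<Rightarrow> real" where
  "fs_norm_sq s u = cNs DIM('a) s / 2 * enn2real (gagliardo s u)"

definition fs_norm :: "real \<Rightarrow> ('a::euclidean_space \<Rightarrow> real) \<Rightarrow> real" where
  "fs_norm s u = sqrt (fs_norm_sq s u)"

definition L2_sq :: "'a set \<Rightarrow> ('a::euclidean_space \<Rightarrow> real) \<Rightarrow> real" where
  "L2_sq \<Omega> u = (LINT x:\<Omega>|lborel. (u x)\<^sup>2)"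

end

theory Submission
  imports Defs
begin


definition Jn :: "real \<Rightarrow> real \<Rightarrow> ('a::euclidean_space) itself \<Rightarrow> ennreal" where
  "Jn p r _ = (\<integral>\<^sup>+ h. ennreal (if r \<le> norm h then 1 / norm (h::'a) powr p else 0) \<partial>lborel)"

definition shell :: "real \<Rightarrow> nat \<Rightarrow> 'a::euclidean_space set" where
  "shell r j = {h. r * 2^j \<le> norm h \<and> norm h < r * 2^(Suc j)}"

lemma shell_disj: "r > 0 \<Longrightarrow> disjoint_family (shell r)"
proof (unfold disjoint_family_on_def, intro ballI impI)
  fix m n :: nat assume r: "r > 0" and mn: "m \<noteq> n"
  { fix a b :: nat assume "a < b"
    then have "r * 2 ^ Suc a \<le> r * 2 ^ b" using r \<open>a<b\<close> by (intro mult_left_mono) (auto simp del: power_Suc intro!: power_increasing)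
    then have "shell r a \<inter> shell r b = ({}::'a set)" unfolding shell_def by auto }
  from this[of m n] this[of n m] mn show "shell r m \<inter> shell r n = ({}::'a set)"
    by (cases "m < n") (auto simp: Int_commute)
qed

lemma shell_Union: assumes r: "r > 0" shows "(\<Union>j. shell r j) = {h::'a::euclidean_space. r \<le> norm h}"
proof
  show "(\<Union>j. shell r j) \<subseteq> {h::'a. r \<le> norm h}"
  proof
    fix h assume "h \<in> (\<Union>j. shell r j)"
    then obtain j where "r * 2^j \<le> norm h" unfolding shell_def by auto
    moreover have "r \<le> r * 2^j" using r by simp
    ultimately show "h \<in> {h. r \<le> norm h}" by simp
  qed
next
  show "{h::'a. r \<le> norm h} \<subseteq> (\<Union>j. shell r j)"
  proof
    fix h :: 'a assume "h \<in> {h. r \<le> norm h}"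
    then have h: "r \<le> norm h" by simp
    define j where "j = nat \<lfloor>log 2 (norm h / r)\<rfloor>"
    have pos: "norm h / r \<ge> 1" using h r by simp
    have lg: "log 2 (norm h / r) \<ge> 0" using pos by simp
    have "real j \<le> log 2 (norm h / r)" "log 2 (norm h / r) < real j + 1"
      unfolding j_def using lg by linarith+
    then have "2 powr real j \<le> norm h / r" "norm h / r < 2 powr (real j + 1)"
      using pos by (simp_all add: le_log_iff log_less_iff)
    then have "2^j \<le> norm h / r" "norm h / r < 2^Suc j"
      by (simp_all add: powr_realpow[symmetric] powr_add)
    then show "h \<in> (\<Union>j. shell r j)" unfolding shell_def using r
      by (auto simp: field_simps)
  qed
qed

lemma shell_ball: "shell r j = ball 0 (r * 2^Suc j) - ball (0::'a::euclidean_space) (r * 2^j)"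
  unfolding shell_def by auto

lemma shell_measure:
  assumes r: "r > 0"
  shows "emeasure lborel (shell r j :: 'a::euclidean_space set) =
     ennreal (unit_ball_vol (real DIM('a)) * ((r * 2^Suc j) ^ DIM('a) - (r * 2^j) ^ DIM('a)))"
proof -
  have le: "r * 2^j \<le> r * 2^Suc j" using r by simp
  have "emeasure lborel (shell r j :: 'a set) = emeasure lborel (ball (0::'a) (r * 2^Suc j)) - emeasure lborel (ball (0::'a) (r * 2^j))"
    unfolding shell_ball using le r
    by (intro emeasure_Diff) (auto simp: emeasure_ball simp del: power_Suc dest: less_le_trans[OF _ le])
  also have "\<dots> = ennreal (unit_ball_vol (real DIM('a)) * (r * 2^Suc j) ^ DIM('a)) - ennreal (unit_ball_vol (real DIM('a)) * (r * 2^j) ^ DIM('a))"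
    using r by (simp add: emeasure_ball del: power_Suc)
  also have "\<dots> = ennreal (unit_ball_vol (real DIM('a)) * ((r * 2^Suc j) ^ DIM('a) - (r * 2^j) ^ DIM('a)))"
    using r by (subst ennreal_minus) (auto simp: algebra_simps)
  finally show ?thesis .
qed

lemma J_sum:
  assumes r: "r > 0"
  shows "Jn p r TYPE('a::euclidean_space) = (\<Sum>j. \<integral>\<^sup>+ h. ennreal (1 / norm (h::'a) powr p) * indicator (shell r j) h \<partial>lborel)"
proof -
  have "Jn p r TYPE('a) = (\<integral>\<^sup>+ h. (\<Sum>j. ennreal (1 / norm (h::'a) powr p) * indicator (shell r j) h) \<partial>lborel)"
    unfolding Jn_def
  proof (rule nn_integral_cong)
    fix h :: 'a
    have "(\<Sum>j. ennreal (1 / norm h powr p) * indicator (shell r j) h) = ennreal (1 / norm h powr p) * indicator (\<Union>j. shell r j) h"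
      using suminf_indicator[OF shell_disj[OF r], of h] by simp
    also have "\<dots> = ennreal (if r \<le> norm h then 1 / norm h powr p else 0)"
      using shell_Union[OF r] by (auto simp: indicator_def)
    finally show "ennreal (if r \<le> norm h then 1 / norm h powr p else 0) = (\<Sum>j. ennreal (1 / norm h powr p) * indicator (shell r j) h)" ..
  qed
  also have "\<dots> = (\<Sum>j. \<integral>\<^sup>+ h. ennreal (1 / norm (h::'a) powr p) * indicator (shell r j) h \<partial>lborel)"
    by (rule nn_integral_suminf) (auto simp: shell_def)
  finally show ?thesis .
qed

lemma shell_real_id:
  fixes r t :: real and N j :: nat
  assumes r: "r > 0"
  shows "(r * 2^j) powr (-(real N + t)) * ((r * 2^Suc j) ^ N - (r * 2^j) ^ N)
         = (2^N - 1) * r powr (-t) * (2 powr (-t))^j"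
proof -
  define \<rho> where "\<rho> = r * 2^j"
  have \<rho>: "\<rho> > 0" using r by (simp add: \<rho>_def)
  have "(r * 2^Suc j) ^ N - (r * 2^j) ^ N = \<rho>^N * (2^N - 1)"
    by (simp add: \<rho>_def power_mult_distrib algebra_simps)
  moreover have "\<rho> powr (-(real N + t)) * \<rho>^N = \<rho> powr (-t)"
    using \<rho> by (simp add: powr_realpow[symmetric] powr_add[symmetric])
  moreover have "\<rho> powr (-t) = r powr (-t) * (2 powr (-t))^j"
    using r by (simp add: \<rho>_def powr_mult powr_realpow[symmetric] powr_powr mult.commute)
  ultimately have "\<rho> powr (-(real N + t)) * (\<rho>^N * (2^N - 1)) = (2^N - 1) * r powr (-t) * (2 powr (-t))^j"
    by (metis mult.assoc mult.commute)
  then show ?thesis using \<open>(r * 2^Suc j) ^ N - (r * 2^j) ^ N = \<rho>^N * (2^N - 1)\<close>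
    by (simp add: \<rho>_def)
qed

lemma shell_upper:
  assumes r: "r > 0" and t: "t > 0"
  shows "(\<integral>\<^sup>+ h. ennreal (1 / norm (h::'a::euclidean_space) powr (real DIM('a) + t)) * indicator (shell r j) h \<partial>lborel)
     \<le> ennreal (unit_ball_vol (real DIM('a)) * (2^DIM('a) - 1) * r powr (-t) * (2 powr (-t))^j)"
proof -
  let ?p = "real DIM('a) + t"
  have "(\<integral>\<^sup>+ h. ennreal (1 / norm (h::'a) powr ?p) * indicator (shell r j) h \<partial>lborel)
     \<le> (\<integral>\<^sup>+ h. ennreal ((r * 2^j) powr (-?p)) * indicator (shell r j) (h::'a) \<partial>lborel)"
  proof (rule nn_integral_mono)
    fix h :: 'a
    assume "h \<in> space lborel"
    show "ennreal (1 / norm h powr ?p) * indicator (shell r j) h \<le> ennreal ((r * 2^j) powr (-?p)) * indicator (shell r j) h"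
    proof (cases "h \<in> shell r j")
      case True
      then have h: "r * 2^j \<le> norm h" by (simp add: shell_def)
      have pos: "0 < r * 2^j" using r by simp
      have "1 / norm h powr ?p = norm h powr (-?p)" by (metis powr_minus_divide)
      also have "\<dots> \<le> (r * 2^j) powr (-?p)" using t pos h by (intro powr_mono2') auto
      finally show ?thesis using True by (auto intro: ennreal_leI)
    qed simp
  qed
  also have "\<dots> = ennreal ((r * 2^j) powr (-?p)) * emeasure lborel (shell r j :: 'a set)"
    by (rule nn_integral_cmult_indicator) (auto simp: shell_def)
  also have "\<dots> = ennreal ((r * 2^j) powr (-?p) * (unit_ball_vol (real DIM('a)) * ((r * 2^Suc j) ^ DIM('a) - (r * 2^j) ^ DIM('a))))"
    using r by (simp add: shell_measure ennreal_mult[symmetric] del: power_Suc)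
  also have "\<dots> = ennreal (unit_ball_vol (real DIM('a)) * ((2^DIM('a) - 1) * r powr (-t) * (2 powr (-t))^j))"
    using shell_real_id[OF r, of j "DIM('a)" t] by (metis mult.left_commute)
  also have "\<dots> = ennreal (unit_ball_vol (real DIM('a)) * (2^DIM('a) - 1) * r powr (-t) * (2 powr (-t))^j)"
    by (simp add: mult.assoc)
  finally show ?thesis .
qed

lemma shell_lower:
  assumes r: "r > 0" and t: "t > 0"
  shows "(\<integral>\<^sup>+ h. ennreal (1 / norm (h::'a::euclidean_space) powr (real DIM('a) + t)) * indicator (shell r j) h \<partial>lborel)
     \<ge> ennreal (2 powr (-(real DIM('a) + t)) * unit_ball_vol (real DIM('a)) * (2^DIM('a) - 1) * r powr (-t) * (2 powr (-t))^j)"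
proof -
  let ?p = "real DIM('a) + t"
  let ?V = "unit_ball_vol (real DIM('a))"
  let ?D = "(r * 2^Suc j) ^ DIM('a) - (r * 2^j) ^ DIM('a)"
  have "ennreal (2 powr (-?p) * ?V * (2^DIM('a) - 1) * r powr (-t) * (2 powr (-t))^j)
     = ennreal (2 powr (-?p) * ?V * ((2^DIM('a) - 1) * r powr (-t) * (2 powr (-t))^j))"
    by (simp only: mult.assoc)
  also have "\<dots> = ennreal (2 powr (-?p) * ?V * ((r * 2^j) powr (-?p) * ?D))"
    by (simp only: shell_real_id[OF r])
  also have "\<dots> = ennreal ((r * 2^Suc j) powr (-?p) * (?V * ?D))"
  proof -
    have eq: "r * 2^Suc j = 2 * (r * 2^j)" by simp
    have "(r * 2^Suc j) powr (-?p) = 2 powr (-?p) * (r * 2^j) powr (-?p)"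
      unfolding eq using r by (simp add: powr_mult)
    then show ?thesis by (simp only: mult_ac)
  qed
  also have "\<dots> = ennreal ((r * 2^Suc j) powr (-?p)) * emeasure lborel (shell r j :: 'a set)"
    using r by (simp add: shell_measure ennreal_mult del: power_Suc)
  also have "\<dots> = (\<integral>\<^sup>+ h. ennreal ((r * 2^Suc j) powr (-?p)) * indicator (shell r j) (h::'a) \<partial>lborel)"
    by (rule nn_integral_cmult_indicator[symmetric]) (auto simp: shell_def)
  also have "\<dots> \<le> (\<integral>\<^sup>+ h. ennreal (1 / norm (h::'a) powr ?p) * indicator (shell r j) h \<partial>lborel)"
  proof (rule nn_integral_mono)
    fix h :: 'a
    show "ennreal ((r * 2^Suc j) powr (-?p)) * indicator (shell r j) h \<le> ennreal (1 / norm h powr ?p) * indicator (shell r j) h"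
    proof (cases "h \<in> shell r j")
      case True
      then have h: "r * 2^j \<le> norm h" "norm h < r * 2^Suc j" by (simp_all add: shell_def)
      have pos: "0 < r * 2^j" using r by simp
      have "(r * 2^Suc j) powr (-?p) \<le> norm h powr (-?p)" using t pos h by (intro powr_mono2') auto
      also have "\<dots> = 1 / norm h powr ?p" by (metis powr_minus_divide)
      finally show ?thesis using True by (auto intro: ennreal_leI)
    qed simp
  qed
  finally show ?thesis .
qed

lemma geom_ennreal:
  assumes c: "c \<ge> 0" and q: "0 \<le> q" "q < 1"
  shows "(\<Sum>j. ennreal (c * q^j)) = ennreal (c / (1 - q))"
proof (rule suminf_ennreal_eq)
  show "\<And>i. 0 \<le> c * q ^ i" using c q by simp
  have "(\<lambda>j. q^j) sums (1 / (1 - q))" using q by (intro geometric_sums) simp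
  from sums_mult[OF this, of c] show "(\<lambda>j. c * q^j) sums (c / (1 - q))" by simp
qed

lemma J_upper:
  assumes r: "r > 0" and t: "t > 0"
  shows "Jn (real DIM('a) + t) r TYPE('a::euclidean_space)
     \<le> ennreal (unit_ball_vol (real DIM('a)) * (2^DIM('a) - 1) * r powr (-t) / (1 - 2 powr (-t)))"
proof -
  have q: "0 \<le> 2 powr (-t)" "2 powr (-t) < (1::real)"
    using powr_less_mono[of "-t" 0 "2::real"] t by auto
  have c: "unit_ball_vol (real DIM('a)) * (2^DIM('a) - 1) * r powr (-t) \<ge> 0" by simp
  have "Jn (real DIM('a) + t) r TYPE('a) \<le> (\<Sum>j. ennreal (unit_ball_vol (real DIM('a)) * (2^DIM('a) - 1) * r powr (-t) * (2 powr (-t))^j))"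
    unfolding J_sum[OF r] by (intro suminf_le shell_upper r t) auto
  also have "\<dots> = ennreal (unit_ball_vol (real DIM('a)) * (2^DIM('a) - 1) * r powr (-t) / (1 - 2 powr (-t)))"
    by (rule geom_ennreal[OF c q])
  finally show ?thesis .
qed

lemma J_lower:
  assumes r: "r > 0" and t: "t > 0"
  shows "Jn (real DIM('a) + t) r TYPE('a::euclidean_space)
     \<ge> ennreal (2 powr (-(real DIM('a) + t)) * unit_ball_vol (real DIM('a)) * (2^DIM('a) - 1) * r powr (-t) / (1 - 2 powr (-t)))"
proof -
  have q: "0 \<le> 2 powr (-t)" "2 powr (-t) < (1::real)"
    using powr_less_mono[of "-t" 0 "2::real"] t by auto
  have c: "2 powr (-(real DIM('a) + t)) * unit_ball_vol (real DIM('a)) * (2^DIM('a) - 1) * r powr (-t) \<ge> 0" by simp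
  have "ennreal (2 powr (-(real DIM('a) + t)) * unit_ball_vol (real DIM('a)) * (2^DIM('a) - 1) * r powr (-t) / (1 - 2 powr (-t)))
     = (\<Sum>j. ennreal (2 powr (-(real DIM('a) + t)) * unit_ball_vol (real DIM('a)) * (2^DIM('a) - 1) * r powr (-t) * (2 powr (-t))^j))"
    by (rule geom_ennreal[OF c q, symmetric])
  also have "\<dots> \<le> Jn (real DIM('a) + t) r TYPE('a)"
    unfolding J_sum[OF r] by (intro suminf_le shell_lower r t) auto
  finally show ?thesis .
qed



lemma cNs_bounds:
  assumes N: "N \<ge> 1"
  shows "\<exists>a b. 0 < a \<and> (\<forall>s. 0 < s \<and> s < 1/4 \<longrightarrow> a * s \<le> cNs N s \<and> cNs N s \<le> b * s)"
proof -
  define g where "g s = 4 powr s * pi powr (- real N / 2) * (1 - s) * Gamma (real N / 2 + s) / Gamma (2 - s)" for s :: real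
  have cg: "cNs N s = s * g s" for s unfolding cNs_def g_def by (simp add: algebra_simps)
  have NN: "real N / 2 \<ge> 1/2" using N by simp
  have cont: "continuous_on {0..1/4} g"
  proof (intro continuous_at_imp_continuous_on ballI)
    fix s :: real assume s: "s \<in> {0..1/4}"
    have "real N / 2 + s \<notin> \<int>\<^sub>\<le>\<^sub>0" using s NN by (auto dest: nonpos_Ints_nonpos)
    moreover have "2 - s \<notin> \<int>\<^sub>\<le>\<^sub>0" using s by (auto dest: nonpos_Ints_nonpos)
    moreover have "Gamma (2 - s) \<noteq> 0" proof -
      have "Gamma (2 - s) > 0" using s by (intro Gamma_real_pos) auto
      then show ?thesis by simp
    qed
    ultimately show "isCont g s" unfolding g_def
      by (intro continuous_intros) auto
  qed
  have gpos: "g s > 0" if "s \<in> {0..1/4}" for s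
    using that NN unfolding g_def by (intro divide_pos_pos mult_pos_pos) auto
  obtain s1 where s1: "s1 \<in> {0..1/4}" "\<forall>y\<in>{0..1/4}. g s1 \<le> g y"
    using continuous_attains_inf[OF _ _ cont] by auto
  obtain s2 where s2: "s2 \<in> {0..1/4}" "\<forall>y\<in>{0..1/4}. g y \<le> g s2"
    using continuous_attains_sup[OF _ _ cont] by auto
  show ?thesis
  proof (intro exI conjI allI impI)
    show "0 < g s1" using gpos s1 by auto
    fix s :: real assume s: "0 < s \<and> s < 1/4"
    then have "s \<in> {0..1/4}" by auto
    then show "g s1 * s \<le> cNs N s" "cNs N s \<le> g s2 * s"
      using s1 s2 s unfolding cg by (auto simp: mult.commute intro: mult_left_mono)
  qed
qed

lemma one_minus_exp_bounds:
  fixes x :: real assumes "0 \<le> x" "x \<le> 1"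
  shows "1 - exp (-x) \<le> x" "x / 2 \<le> 1 - exp (-x)"
proof -
  show "1 - exp (-x) \<le> x" using exp_ge_add_one_self[of "-x"] by simp
  have "1 + x \<le> exp x" by (rule exp_ge_add_one_self)
  then have "exp (-x) \<le> 1 / (1 + x)" using assms by (simp add: exp_minus field_simps)
  moreover have "1 / (1 + x) \<le> 1 - x / 2"
  proof -
    have "x * x \<le> x * 1" using assms by (intro mult_left_mono) auto
    then show ?thesis using assms by (simp add: field_simps)
  qed
  ultimately show "x / 2 \<le> 1 - exp (-x)" by simp
qed

lemma q_bounds:
  fixes t :: real assumes t: "0 < t" "t \<le> 1"
  shows "1 - 2 powr (-t) \<le> t * ln 2" "t * ln 2 / 2 \<le> 1 - 2 powr (-t)"
proof -
  have e: "2 powr (-t) = exp (-(t * ln 2))" by (simp add: powr_def)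
  have l: "0 \<le> t * ln 2" "t * ln 2 \<le> 1" using t ln_2_less_1 by (auto intro: mult_le_one)
  show "1 - 2 powr (-t) \<le> t * ln 2" "t * ln 2 / 2 \<le> 1 - 2 powr (-t)"
    unfolding e using one_minus_exp_bounds[OF l] by auto
qed



lemma J_transl:
  fixes x :: "'a::euclidean_space"
  shows "(\<integral>\<^sup>+ y. ennreal (if r \<le> norm (x - y) then 1 / norm (x - y) powr p else 0) \<partial>lborel) = Jn p r TYPE('a)"
proof -
  let ?f = "\<lambda>y::'a. ennreal (if r \<le> norm (x - y) then 1 / norm (x - y) powr p else 0)"
  have "(\<integral>\<^sup>+ y. ?f y \<partial>lborel) = (\<integral>\<^sup>+ y. ?f y \<partial>distr lborel borel ((+) x))"
    by (simp add: lborel_distr_plus)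
  also have "\<dots> = (\<integral>\<^sup>+ h. ?f (x + h) \<partial>lborel)"
    by (rule nn_integral_distr) auto
  also have "\<dots> = Jn p r TYPE('a)"
  proof -
    have e: "x - (x + h) = - h" for h :: 'a by simp
    show ?thesis unfolding Jn_def e norm_minus_cancel ..
  qed
  finally show ?thesis .
qed

lemma J_transl':
  fixes y :: "'a::euclidean_space"
  shows "(\<integral>\<^sup>+ x. ennreal (if r \<le> norm (x - y) then 1 / norm (x - y) powr p else 0) \<partial>lborel) = Jn p r TYPE('a)"
proof -
  have "(\<integral>\<^sup>+ x. ennreal (if r \<le> norm (x - y) then 1 / norm (x - y) powr p else 0) \<partial>lborel)
     = (\<integral>\<^sup>+ x. ennreal (if r \<le> norm (y - x) then 1 / norm (y - x) powr p else 0) \<partial>lborel)"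
    by (simp only: norm_minus_commute)
  then show ?thesis using J_transl[of r y p] by simp
qed

lemma meas_test:
  fixes u :: "'a::euclidean_space \<Rightarrow> real"
  assumes [measurable]: "u \<in> borel_measurable lborel"
  shows "(\<lambda>(x,y). ennreal ((u x - u y)\<^sup>2 / norm (x - y) powr p)) \<in> borel_measurable (lborel \<Otimes>\<^sub>M lborel)"
    "(\<lambda>(x,y). ennreal (2 * (u x)\<^sup>2) * ennreal (if 1 \<le> norm (x - y) then 1 / norm (x - y) powr p else 0)) \<in> borel_measurable (lborel \<Otimes>\<^sub>M lborel)"
    "(\<lambda>(x::'a). \<integral>\<^sup>+ y. ennreal ((u x - u y)\<^sup>2 / norm (x - y) powr p) \<partial>lborel) \<in> borel_measurable lborel"
  by measurable

lemma pw_real: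
  fixes a b d ps pq :: real
  assumes d: "d \<ge> 0" and pq: "0 < pq" "pq \<le> ps"
  shows "(a - b)\<^sup>2 / d powr pq \<le> (a - b)\<^sup>2 / d powr ps
     + 2 * a\<^sup>2 * (if 1 \<le> d then 1 / d powr pq else 0) + 2 * b\<^sup>2 * (if 1 \<le> d then 1 / d powr pq else 0)"
proof (cases "d = 0")
  case True then show ?thesis by simp
next
  case False
  then have d0: "d > 0" using d by simp
  have nn: "0 \<le> (a - b)\<^sup>2 / d powr ps" using d0 by simp
  show ?thesis
  proof (cases "1 \<le> d")
    case True
    have "(a - b)\<^sup>2 \<le> 2 * a\<^sup>2 + 2 * b\<^sup>2" using zero_le_power2[of "a + b"] unfolding power2_sum power2_diff by linarith
    then have "(a - b)\<^sup>2 / d powr pq \<le> (2 * a\<^sup>2 + 2 * b\<^sup>2) / d powr pq"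
      using d0 by (intro divide_right_mono) auto
    also have "\<dots> = 2 * a\<^sup>2 * (1 / d powr pq) + 2 * b\<^sup>2 * (1 / d powr pq)" by (simp only: add_divide_distrib times_divide_eq_right mult_1_right)
    finally have F: "(a - b)\<^sup>2 / d powr pq \<le> 2 * a\<^sup>2 * (1 / d powr pq) + 2 * b\<^sup>2 * (1 / d powr pq)" .
    have eq: "(if 1 \<le> d then 1 / d powr pq else 0) = 1 / d powr pq" using True by simp
    show ?thesis unfolding eq using F nn by linarith
  next
    case False
    have "d powr ps \<le> d powr pq" using False d0 pq by (intro powr_mono') auto
    then have "(a - b)\<^sup>2 / d powr pq \<le> (a - b)\<^sup>2 / d powr ps"
      using d0 by (intro divide_left_mono) auto
    then show ?thesis using False by simp
  qed
qed

lemma pw_enn: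
  fixes a b d ps pq :: real
  assumes d: "d \<ge> 0" and pq: "0 < pq" "pq \<le> ps"
  shows "ennreal ((a - b)\<^sup>2 / d powr pq) \<le> ennreal ((a - b)\<^sup>2 / d powr ps)
     + ennreal (2 * a\<^sup>2) * ennreal (if 1 \<le> d then 1 / d powr pq else 0) + ennreal (2 * b\<^sup>2) * ennreal (if 1 \<le> d then 1 / d powr pq else 0)"
proof -
  have k: "0 \<le> (if 1 \<le> d then 1 / d powr pq else 0)" by simp
  have "ennreal ((a - b)\<^sup>2 / d powr pq) \<le> ennreal ((a - b)\<^sup>2 / d powr ps
     + 2 * a\<^sup>2 * (if 1 \<le> d then 1 / d powr pq else 0) + 2 * b\<^sup>2 * (if 1 \<le> d then 1 / d powr pq else 0))"
    by (rule ennreal_leI[OF pw_real[OF assms]])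
  also have "\<dots> = ennreal ((a - b)\<^sup>2 / d powr ps)
     + ennreal (2 * a\<^sup>2) * ennreal (if 1 \<le> d then 1 / d powr pq else 0) + ennreal (2 * b\<^sup>2) * ennreal (if 1 \<le> d then 1 / d powr pq else 0)"
    using k by (simp add: ennreal_plus ennreal_mult del: ennreal_plus_if)
  finally show ?thesis .
qed



lemma gag_upper:
  fixes u :: "'a::euclidean_space \<Rightarrow> real"
  assumes [measurable]: "u \<in> borel_measurable lborel" and \<sigma>: "0 < \<sigma>" "\<sigma> \<le> s"
  shows "gagliardo \<sigma> u \<le> gagliardo s u + 4 * Jn (real DIM('a) + 2 * \<sigma>) 1 TYPE('a) * (\<integral>\<^sup>+ x. ennreal ((u x)\<^sup>2) \<partial>lborel)"
proof -
  define pq where "pq = real DIM('a) + 2 * \<sigma>"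
  define ps where "ps = real DIM('a) + 2 * s"
  define J where "J = Jn pq 1 TYPE('a)"
  define L where "L = (\<integral>\<^sup>+ x. ennreal ((u x)\<^sup>2) \<partial>lborel)"
  have pq: "0 < pq" "pq \<le> ps" using \<sigma> by (auto simp: pq_def ps_def)
  let ?K = "\<lambda>x y::'a. ennreal (if 1 \<le> norm (x - y) then 1 / norm (x - y) powr pq else 0)"
  let ?Fs = "\<lambda>x y::'a. ennreal ((u x - u y)\<^sup>2 / norm (x - y) powr ps)"
  let ?A = "\<lambda>x y::'a. ennreal (2 * (u x)\<^sup>2) * ?K x y"
  let ?B = "\<lambda>x y::'a. ennreal (2 * (u y)\<^sup>2) * ?K x y"
  have m1[measurable]: "(\<lambda>(x, y). ?Fs x y) \<in> borel_measurable (lborel \<Otimes>\<^sub>M lborel)"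
    by measurable
  have m2[measurable]: "(\<lambda>(x, y). ?A x y) \<in> borel_measurable (lborel \<Otimes>\<^sub>M lborel)"
    by measurable
  have m3[measurable]: "(\<lambda>(x, y). ?B x y) \<in> borel_measurable (lborel \<Otimes>\<^sub>M lborel)"
    by measurable
  have "gagliardo \<sigma> u = (\<integral>\<^sup>+ x. \<integral>\<^sup>+ y. ennreal ((u x - u y)\<^sup>2 / norm (x - y) powr pq) \<partial>lborel \<partial>lborel)"
    unfolding gagliardo_def pq_def ..
  also have "\<dots> \<le> (\<integral>\<^sup>+ x. \<integral>\<^sup>+ y. ?Fs x y + ?A x y + ?B x y \<partial>lborel \<partial>lborel)"
    by (intro nn_integral_mono pw_enn pq) simp
  also have "\<dots> = (\<integral>\<^sup>+ x. (\<integral>\<^sup>+ y. ?Fs x y \<partial>lborel) + ennreal (2 * (u x)\<^sup>2) * J + (\<integral>\<^sup>+ y. ?B x y \<partial>lborel) \<partial>lborel)"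
  proof (rule nn_integral_cong)
    fix x :: 'a
    have "(\<integral>\<^sup>+ y. ?Fs x y + ?A x y + ?B x y \<partial>lborel) = (\<integral>\<^sup>+ y. ?Fs x y + ?A x y \<partial>lborel) + (\<integral>\<^sup>+ y. ?B x y \<partial>lborel)"
      by (rule nn_integral_add) measurable
    also have "(\<integral>\<^sup>+ y. ?Fs x y + ?A x y \<partial>lborel) = (\<integral>\<^sup>+ y. ?Fs x y \<partial>lborel) + (\<integral>\<^sup>+ y. ?A x y \<partial>lborel)"
      by (rule nn_integral_add) measurable
    also have "(\<integral>\<^sup>+ y. ?A x y \<partial>lborel) = ennreal (2 * (u x)\<^sup>2) * J"
      unfolding J_def by (subst nn_integral_cmult) (measurable, simp add: J_transl)
    finally show "(\<integral>\<^sup>+ y. ?Fs x y + ?A x y + ?B x y \<partial>lborel) = (\<integral>\<^sup>+ y. ?Fs x y \<partial>lborel) + ennreal (2 * (u x)\<^sup>2) * J + (\<integral>\<^sup>+ y. ?B x y \<partial>lborel)" .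
  qed
  also have "\<dots> = (\<integral>\<^sup>+ x. (\<integral>\<^sup>+ y. ?Fs x y \<partial>lborel) \<partial>lborel) + (\<integral>\<^sup>+ x. ennreal (2 * (u x)\<^sup>2) * J \<partial>lborel) + (\<integral>\<^sup>+ x. (\<integral>\<^sup>+ y. ?B x y \<partial>lborel) \<partial>lborel)"
  proof -
    have i1: "(\<lambda>x. \<integral>\<^sup>+ y. ?Fs x y \<partial>lborel) \<in> borel_measurable lborel"
      using lborel.borel_measurable_nn_integral[OF m1] by simp
    have i3: "(\<lambda>x. \<integral>\<^sup>+ y. ?B x y \<partial>lborel) \<in> borel_measurable lborel"
      using lborel.borel_measurable_nn_integral[OF m3] by simp
    have i2: "(\<lambda>x. ennreal (2 * (u x)\<^sup>2) * J) \<in> borel_measurable lborel" by measurable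
    have i12: "(\<lambda>x. (\<integral>\<^sup>+ y. ?Fs x y \<partial>lborel) + ennreal (2 * (u x)\<^sup>2) * J) \<in> borel_measurable lborel"
      using i1 i2 by (rule borel_measurable_add)
    show ?thesis
      by (simp only: nn_integral_add[OF i12 i3] nn_integral_add[OF i1 i2])
  qed
  also have "(\<integral>\<^sup>+ x. (\<integral>\<^sup>+ y. ?Fs x y \<partial>lborel) \<partial>lborel) = gagliardo s u"
    unfolding gagliardo_def ps_def ..
  also have "(\<integral>\<^sup>+ x. ennreal (2 * (u x)\<^sup>2) * J \<partial>lborel) = 2 * J * L"
  proof -
    have "(\<integral>\<^sup>+ x. ennreal (2 * (u x)\<^sup>2) * J \<partial>lborel) = (\<integral>\<^sup>+ x. (2 * J) * ennreal ((u x)\<^sup>2) \<partial>lborel)"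
      by (intro nn_integral_cong) (simp add: ennreal_mult mult_ac)
    also have "\<dots> = 2 * J * L" unfolding L_def by (rule nn_integral_cmult) measurable
    finally show ?thesis .
  qed
  also have "(\<integral>\<^sup>+ x. (\<integral>\<^sup>+ y. ?B x y \<partial>lborel) \<partial>lborel) = (\<integral>\<^sup>+ y. (\<integral>\<^sup>+ x. ?B x y \<partial>lborel) \<partial>lborel)"
    by (rule lborel_pair.Fubini'[symmetric]) measurable
  also have "\<dots> = (\<integral>\<^sup>+ y. (2 * J) * ennreal ((u y)\<^sup>2) \<partial>lborel)"
  proof (rule nn_integral_cong)
    fix y :: 'a
    have "(\<integral>\<^sup>+ x. ?B x y \<partial>lborel) = ennreal (2 * (u y)\<^sup>2) * J"
      unfolding J_def by (subst nn_integral_cmult) (measurable, simp add: J_transl')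
    then show "(\<integral>\<^sup>+ x. ?B x y \<partial>lborel) = (2 * J) * ennreal ((u y)\<^sup>2)"
      by (simp add: ennreal_mult mult_ac)
  qed
  also have "\<dots> = 2 * J * L" unfolding L_def by (rule nn_integral_cmult) measurable
  finally have F: "gagliardo \<sigma> u \<le> gagliardo s u + 2 * J * L + 2 * J * L" .
  have "2 * J * L + 2 * J * L = 2 * (2 * J * L)"
    by (rule mult_2[symmetric])
  also have "\<dots> = 4 * J * L" by (simp add: mult.assoc[symmetric])
  finally have E: "2 * J * L + 2 * J * L = 4 * J * L" .
  from F have "gagliardo \<sigma> u \<le> gagliardo s u + 4 * J * L" by (simp only: add.assoc E)
  then show ?thesis unfolding J_def L_def pq_def .
qed



lemma gag_lower:
  fixes u :: "'a::euclidean_space \<Rightarrow> real"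
  assumes [measurable]: "u \<in> borel_measurable lborel" and \<Omega>: "\<Omega> \<subseteq> ball 0 R" "\<Omega> \<in> sets lborel"
    and AE0: "AE x in lborel. x \<notin> \<Omega> \<longrightarrow> u x = 0"
  shows "Jn (real DIM('a) + 2 * s) (2 * R) TYPE('a) * (\<integral>\<^sup>+ x. ennreal ((u x)\<^sup>2) \<partial>lborel) \<le> gagliardo s u"
proof -
  define p where "p = real DIM('a) + 2 * s"
  define J where "J = Jn p (2 * R) TYPE('a)"
  let ?K = "\<lambda>x y::'a. ennreal (if 2 * R \<le> norm (x - y) then 1 / norm (x - y) powr p else 0)"
  have [measurable]: "\<Omega> \<in> sets borel" using \<Omega>(2) by simp
  have "J * (\<integral>\<^sup>+ x. ennreal ((u x)\<^sup>2) \<partial>lborel) = (\<integral>\<^sup>+ x. J * ennreal ((u x)\<^sup>2) \<partial>lborel)"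
    by (rule nn_integral_cmult[symmetric]) measurable
  also have "\<dots> = (\<integral>\<^sup>+ x. indicator \<Omega> x * (J * ennreal ((u x)\<^sup>2)) \<partial>lborel)"
    by (rule nn_integral_cong_AE) (use AE0 in \<open>auto simp: indicator_def\<close>)
  also have "\<dots> \<le> (\<integral>\<^sup>+ x. \<integral>\<^sup>+ y. ennreal ((u x - u y)\<^sup>2 / norm (x - y) powr p) \<partial>lborel \<partial>lborel)"
  proof (rule nn_integral_mono)
    fix x :: 'a
    show "indicator \<Omega> x * (J * ennreal ((u x)\<^sup>2)) \<le> (\<integral>\<^sup>+ y. ennreal ((u x - u y)\<^sup>2 / norm (x - y) powr p) \<partial>lborel)"
    proof (cases "x \<in> \<Omega>")
      case False then show ?thesis by simp
    next
      case True
      then have nx: "norm x < R" using \<Omega>(1) by auto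
      have "indicator \<Omega> x * (J * ennreal ((u x)\<^sup>2)) = (\<integral>\<^sup>+ y. ennreal ((u x)\<^sup>2) * ?K x y \<partial>lborel)"
        using True unfolding J_def by (subst nn_integral_cmult) (measurable, simp add: J_transl mult.commute)
      also have "\<dots> \<le> (\<integral>\<^sup>+ y. ennreal ((u x - u y)\<^sup>2 / norm (x - y) powr p) \<partial>lborel)"
      proof (rule nn_integral_mono_AE)
        show "AE y in lborel. ennreal ((u x)\<^sup>2) * ?K x y \<le> ennreal ((u x - u y)\<^sup>2 / norm (x - y) powr p)"
          using AE0
        proof eventually_elim
          case (elim y)
          show ?case
          proof (cases "2 * R \<le> norm (x - y)")
            case True
            have "norm (x - y) \<le> norm x + norm y" by (rule norm_triangle_ineq4)
            then have "y \<notin> ball 0 R" using True nx by auto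
            then have "y \<notin> \<Omega>" using \<Omega>(1) by auto
            then have "u y = 0" using elim by simp
            then show ?thesis using True by (simp add: ennreal_mult[symmetric])
          qed simp
        qed
      qed
      finally show ?thesis .
    qed
  qed
  also have "\<dots> = gagliardo s u" unfolding gagliardo_def p_def ..
  finally show ?thesis unfolding J_def p_def .
qed



lemma J_low_est:
  assumes \<rho>: "\<rho> \<ge> 1" and s: "0 < s" "s < 1/4"
  shows "ennreal (2 powr (-(real DIM('a) + 1)) * unit_ball_vol (real DIM('a)) * (2^DIM('a) - 1) / (\<rho> * 2 * ln 2) / s)
     \<le> Jn (real DIM('a) + 2 * s) \<rho> TYPE('a::euclidean_space)"
proof -
  let ?V = "unit_ball_vol (real DIM('a))" and ?D = "(2::real)^DIM('a) - 1" and ?N = "real DIM('a)"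
  have V: "?V > 0" by simp
  have D: "?D \<ge> 0" by simp
  have q1: "1 - 2 powr (- (2 * s)) \<le> 2 * s * ln 2" using q_bounds(1)[of "2 * s"] s by simp
  have q0: "0 < 1 - 2 powr (- (2 * s))" using powr_less_mono[of "- (2 * s)" 0 "2::real"] s by auto
  have a1: "2 powr (-(?N + 1)) \<le> 2 powr (-(?N + 2 * s))" using s by (intro powr_mono) auto
  have a2: "1 / \<rho> \<le> \<rho> powr (- (2 * s))"
  proof -
    have "\<rho> powr (-1) \<le> \<rho> powr (- (2 * s))" using s \<rho> by (intro powr_mono) auto
    then show ?thesis using \<rho> by (simp add: powr_minus_divide)
  qed
  have "2 powr (-(?N + 1)) * ?V * ?D / (\<rho> * 2 * ln 2) / s = (2 powr (-(?N + 1)) * ?V * ?D * (1 / \<rho>)) / (2 * s * ln 2)"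
    using \<rho> s by (simp add: field_simps)
  also have "\<dots> \<le> (2 powr (-(?N + 2 * s)) * ?V * ?D * \<rho> powr (- (2 * s))) / (2 * s * ln 2)"
    using s V D a1 a2 \<rho> by (intro divide_right_mono mult_mono) auto
  also have "\<dots> \<le> (2 powr (-(?N + 2 * s)) * ?V * ?D * \<rho> powr (- (2 * s))) / (1 - 2 powr (- (2 * s)))"
    using q0 q1 V D by (intro divide_left_mono) auto
  finally have "ennreal (2 powr (-(?N + 1)) * ?V * ?D / (\<rho> * 2 * ln 2) / s)
      \<le> ennreal (2 powr (-(?N + 2 * s)) * ?V * ?D * \<rho> powr (- (2 * s)) / (1 - 2 powr (- (2 * s))))"
    by (rule ennreal_leI)
  also have "\<dots> \<le> Jn (?N + 2 * s) \<rho> TYPE('a)"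
    using J_lower[of \<rho> "2 * s"] \<rho> s by simp
  finally show ?thesis .
qed

lemma J_up_est:
  assumes s: "0 < s" "s < 1/4"
  shows "Jn (real DIM('a) + 2 * s) 1 TYPE('a::euclidean_space)
     \<le> ennreal (unit_ball_vol (real DIM('a)) * (2^DIM('a) - 1) / ln 2 / s)"
proof -
  let ?V = "unit_ball_vol (real DIM('a))" and ?D = "(2::real)^DIM('a) - 1" and ?N = "real DIM('a)"
  have V: "?V > 0" by simp
  have D: "?D \<ge> 0" by simp
  have q1: "2 * s * ln 2 / 2 \<le> 1 - 2 powr (- (2 * s))" using q_bounds(2)[of "2 * s"] s by simp
  have "Jn (?N + 2 * s) 1 TYPE('a) \<le> ennreal (?V * ?D / (1 - 2 powr (- (2 * s))))"
    using J_upper[of 1 "2 * s"] s by simp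
  also have "\<dots> \<le> ennreal (?V * ?D / ln 2 / s)"
  proof (rule ennreal_leI)
    have "?V * ?D / (1 - 2 powr (- (2 * s))) \<le> ?V * ?D / (2 * s * ln 2 / 2)"
    proof (intro divide_left_mono)
      have "0 < s * ln 2" using s by simp
      then show "0 < (1 - 2 powr (- (2 * s))) * (2 * s * ln 2 / 2)" using q1 by (intro mult_pos_pos) auto
    qed (use q1 V D s in auto)
    also have "\<dots> = ?V * ?D / ln 2 / s" using s by (simp add: field_simps)
    finally show "?V * ?D / (1 - 2 powr (- (2 * s))) \<le> ?V * ?D / ln 2 / s" .
  qed
  finally show ?thesis .
qed



theorem lemma3p6:
  fixes \<Omega> :: "'a::euclidean_space set" and C :: real
  assumes "bounded \<Omega>" and "open \<Omega>" and "C > 0"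
  shows "\<exists>C' > 0. \<forall>s u. 0 < s \<and> s < 1/4 \<and> u \<in> Hs0 s \<Omega> \<and> fs_norm s u < C \<longrightarrow>
            (\<forall>\<sigma>. 0 < \<sigma> \<and> \<sigma> < s \<longrightarrow>
               u \<in> Hs0 \<sigma> \<Omega> \<and> L2_sq \<Omega> u + (fs_norm \<sigma> u)\<^sup>2 < C')"
proof -
  let ?N = "DIM('a)"
  let ?V = "unit_ball_vol (real DIM('a))" and ?D = "(2::real)^DIM('a) - 1"
  obtain R0 where R0: "R0 > 0" "\<Omega> \<subseteq> ball 0 R0" using bounded_subset_ballD[OF assms(1)] by blast
  define R where "R = max R0 1"
  have R: "R \<ge> 1" "\<Omega> \<subseteq> ball 0 R" using R0 by (auto simp: R_def)
  obtain a b where a: "0 < a" and ab: "\<And>s. 0 < s \<Longrightarrow> s < 1/4 \<Longrightarrow> a * s \<le> cNs ?N s \<and> cNs ?N s \<le> b * s"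
    using cNs_bounds[of ?N] DIM_positive[where 'a='a] by (metis One_nat_def Suc_leI)
  have b: "0 < b"
  proof -
    have "a * (1/8) \<le> b * (1/8)" using ab[of "1/8"] by auto
    then show ?thesis using a by simp
  qed
  have V: "?V > 0" by simp
  have D: "?D > 0"
  proof -
    have "(2::real)^1 \<le> 2^?N" using DIM_positive[where 'a='a] by (intro power_increasing) auto
    then show ?thesis by simp
  qed
  define Kl where "Kl = 2 powr (-(real ?N + 1)) * ?V * ?D / ((2 * R) * 2 * ln 2)"
  define Ku where "Ku = ?V * ?D / ln 2"
  have Kl: "Kl > 0" unfolding Kl_def using V D R by (intro divide_pos_pos mult_pos_pos) auto
  have Ku: "Ku > 0" unfolding Ku_def using V D by simp
  define M where "M = 2 * C^2 / (a * Kl)"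
  have M: "M > 0" unfolding M_def using a Kl assms(3) by simp
  define C' where "C' = M + b * C^2 / a + 4 * b * Ku * M"
  have \<Omega>meas: "\<Omega> \<in> sets lborel" using assms(2) by simp
  show ?thesis
  proof (intro exI[of _ C'] conjI allI impI)
    show "C' > 0" unfolding C'_def using M a b Ku assms(3) by (intro add_pos_pos mult_pos_pos divide_pos_pos) auto
    fix s \<sigma> :: real and u :: "'a \<Rightarrow> real"
    assume H: "0 < s \<and> s < 1/4 \<and> u \<in> Hs0 s \<Omega> \<and> fs_norm s u < C" and \<sigma>: "0 < \<sigma> \<and> \<sigma> < s"
    have s: "0 < s" "s < 1/4" using H by auto
    have um[measurable]: "u \<in> borel_measurable lborel" and ui: "integrable lborel (\<lambda>x. (u x)\<^sup>2)"
      and Gfin: "gagliardo s u < \<infinity>" and AE0: "AE x in lborel. x \<notin> \<Omega> \<longrightarrow> u x = 0"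
      using H by (auto simp: Hs0_def Hs_def)
    define L where "L = (LINT x|lborel. (u x)\<^sup>2)"
    have L0: "L \<ge> 0" unfolding L_def by simp
    have Lenn: "(\<integral>\<^sup>+ x. ennreal ((u x)\<^sup>2) \<partial>lborel) = ennreal L"
      unfolding L_def by (rule nn_integral_eq_integral[OF ui]) simp
    have L2: "L2_sq \<Omega> u = L"
      unfolding L2_sq_def L_def set_lebesgue_integral_def
    proof (rule integral_cong_AE)
      have [measurable]: "\<Omega> \<in> sets borel" using assms(2) by simp
      show "(\<lambda>x. indicator \<Omega> x *\<^sub>R (u x)\<^sup>2) \<in> borel_measurable lborel" by measurable
      show "(\<lambda>x. (u x)\<^sup>2) \<in> borel_measurable lborel" by measurable
      show "AE x in lborel. indicator \<Omega> x *\<^sub>R (u x)\<^sup>2 = (u x)\<^sup>2"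
        using AE0 by eventually_elim (auto simp: indicator_def)
    qed
    define gs where "gs = enn2real (gagliardo s u)"
    have Gs: "gagliardo s u = ennreal gs" unfolding gs_def using Gfin by simp
    have gs0: "gs \<ge> 0" unfolding gs_def by simp
    define cs where "cs = cNs ?N s"
    have cs: "a * s \<le> cs" "cs \<le> b * s" using ab[OF s] by (auto simp: cs_def)
    have cs0: "cs > 0" using cs(1) a s by (smt (verit) mult_pos_pos)
    have normC: "cs / 2 * gs < C^2"
    proof -
      have x0: "0 \<le> cs / 2 * gs" using cs0 gs0 by simp
      have "sqrt (cs / 2 * gs) < C" using H by (simp add: fs_norm_def fs_norm_sq_def cs_def gs_def)
      then have "(sqrt (cs / 2 * gs))^2 < C^2" using x0 by (intro power_strict_mono) auto
      then show ?thesis using x0 by simp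
    qed
    have "ennreal (Kl / s) * ennreal L \<le> Jn (real ?N + 2 * s) (2 * R) TYPE('a) * ennreal L"
      using J_low_est[of "2 * R" s] R s unfolding Kl_def by (intro mult_right_mono) (auto simp: mult.assoc)
    also have "\<dots> \<le> gagliardo s u"
      using gag_lower[OF um R(2) \<Omega>meas AE0, of s] unfolding Lenn .
    finally have F1: "ennreal (Kl / s) * ennreal L \<le> ennreal gs" unfolding Gs .
    have "ennreal (Kl / s) * ennreal L = ennreal (Kl / s * L)"
      using Kl s L0 by (intro ennreal_mult[symmetric]) auto
    with F1 have "ennreal (Kl / s * L) \<le> ennreal gs" by simp
    then have low: "Kl / s * L \<le> gs" using gs0 by simp
    then have low2: "Kl * L \<le> s * gs" using s by (simp add: field_simps)
    have sgs: "a * (s * gs) < 2 * C^2"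
    proof -
      have "a * s * gs \<le> cs * gs" using cs(1) gs0 by (intro mult_right_mono) auto
      then show ?thesis using normC by simp
    qed
    have LM: "L < M"
    proof -
      have "a * (Kl * L) \<le> a * (s * gs)" using low2 a by (intro mult_left_mono) auto
      then have "(a * Kl) * L < 2 * C^2" using sgs by (simp add: mult.assoc)
      then show ?thesis unfolding M_def using a Kl by (simp add: field_simps)
    qed
    have "gagliardo \<sigma> u \<le> gagliardo s u + 4 * Jn (real ?N + 2 * \<sigma>) 1 TYPE('a) * ennreal L"
      using gag_upper[OF um, of \<sigma> s] \<sigma> unfolding Lenn by simp
    also have "\<dots> \<le> ennreal gs + 4 * ennreal (Ku / \<sigma>) * ennreal L"
      unfolding Gs Ku_def using J_up_est[of \<sigma>] \<sigma> s
      by (intro add_mono mult_right_mono mult_left_mono) auto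
    also have "\<dots> = ennreal (gs + 4 * (Ku / \<sigma>) * L)"
    proof -
      have k0: "0 \<le> Ku / \<sigma>" using Ku \<sigma> by simp
      have "ennreal (4 * (Ku / \<sigma>) * L) = ennreal (4 * (Ku / \<sigma>)) * ennreal L"
        using k0 L0 by (intro ennreal_mult) auto
      also have "ennreal (4 * (Ku / \<sigma>)) = ennreal 4 * ennreal (Ku / \<sigma>)"
        using k0 by (intro ennreal_mult) auto
      finally have "ennreal (4 * (Ku / \<sigma>) * L) = 4 * ennreal (Ku / \<sigma>) * ennreal L" by simp
      moreover have "ennreal (gs + 4 * (Ku / \<sigma>) * L) = ennreal gs + ennreal (4 * (Ku / \<sigma>) * L)"
      proof (rule ennreal_plus)
        show "0 \<le> gs" by (rule gs0)
        show "0 \<le> 4 * (Ku / \<sigma>) * L" using k0 L0 by (intro mult_nonneg_nonneg) auto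
      qed
      ultimately show ?thesis by simp
    qed
    finally have Gsig: "gagliardo \<sigma> u \<le> ennreal (gs + 4 * (Ku / \<sigma>) * L)" .
    then have Gsfin: "gagliardo \<sigma> u < \<infinity>" by (rule le_less_trans) simp
    define g\<sigma> where "g\<sigma> = enn2real (gagliardo \<sigma> u)"
    have Gs2: "gagliardo \<sigma> u = ennreal g\<sigma>" unfolding g\<sigma>_def using Gsfin by simp
    have gsig0: "g\<sigma> \<ge> 0" unfolding g\<sigma>_def by simp
    have gsig: "g\<sigma> \<le> gs + 4 * (Ku / \<sigma>) * L"
      using Gsig unfolding Gs2 using gs0 Ku \<sigma> L0 by (subst (asm) ennreal_le_iff) auto
    have HS: "u \<in> Hs0 \<sigma> \<Omega>" using H Gsfin by (auto simp: Hs0_def Hs_def)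
    have "L2_sq \<Omega> u + (fs_norm \<sigma> u)\<^sup>2 < C'"
    proof -
      define c\<sigma> where "c\<sigma> = cNs ?N \<sigma>"
      have c\<sigma>: "a * \<sigma> \<le> c\<sigma>" "c\<sigma> \<le> b * \<sigma>" using ab[of \<sigma>] \<sigma> s by (auto simp: c\<sigma>_def)
      have c\<sigma>0: "c\<sigma> > 0" using c\<sigma>(1) a \<sigma> by (smt (verit) mult_pos_pos)
      have fsq: "(fs_norm \<sigma> u)\<^sup>2 = c\<sigma> / 2 * g\<sigma>"
        using c\<sigma>0 gsig0 by (simp add: fs_norm_def fs_norm_sq_def c\<sigma>_def g\<sigma>_def)
      have "c\<sigma> / 2 * g\<sigma> \<le> (b * \<sigma>) / 2 * (gs + 4 * (Ku / \<sigma>) * L)"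
        using c\<sigma> c\<sigma>0 gsig gsig0 by (intro mult_mono) auto
      also have "\<dots> = b / 2 * (\<sigma> * gs) + 2 * b * Ku * L"
        using \<sigma> by (simp add: field_simps)
      also have "\<dots> \<le> b / 2 * (s * gs) + 2 * b * Ku * M"
      proof (rule add_mono)
        have "\<sigma> * gs \<le> s * gs" using \<sigma> gs0 by (intro mult_right_mono) auto
        then show "b / 2 * (\<sigma> * gs) \<le> b / 2 * (s * gs)" using b by (intro mult_left_mono) auto
        have "0 \<le> 2 * b * Ku" using b Ku by simp
        then show "2 * b * Ku * L \<le> 2 * b * Ku * M" using LM by (intro mult_left_mono) auto
      qed
      also have "\<dots> \<le> b * C^2 / a + 4 * b * Ku * M"
      proof -
        have "s * gs \<le> 2 * C^2 / a" using sgs a by (simp add: field_simps)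
        then have "b / 2 * (s * gs) \<le> b / 2 * (2 * C^2 / a)" using b by (intro mult_left_mono) auto
        moreover have "2 * b * Ku * M \<le> 4 * b * Ku * M" using b Ku M by simp
        ultimately show ?thesis by simp
      qed
      finally have "(fs_norm \<sigma> u)\<^sup>2 \<le> b * C^2 / a + 4 * b * Ku * M" unfolding fsq .
      then have "L + (fs_norm \<sigma> u)\<^sup>2 < M + (b * C^2 / a + 4 * b * Ku * M)" using LM by simp
      then show "L2_sq \<Omega> u + (fs_norm \<sigma> u)\<^sup>2 < C'" by (simp add: C'_def L2 add.assoc)
    qed
    then show "L2_sq \<Omega> u + (fs_norm \<sigma> u)\<^sup>2 < C'" .
    show "u \<in> Hs0 \<sigma> \<Omega>" by (rule HS)
  qed
qed


end
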